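(* Let $e\ge2$ and let $\lambda$ be a nonempty partition of $n$. Then $\mathrm{sh}_e(\mathrm{gr}(\omega_\lambda))=\mathrm{sh}_e(\mathrm{gr}(\omega_{\mathrm{reg}_e(\lambda)}))$ and $\mathrm{sh}_e(\mathrm{gr}(\tilde\omega_\lambda))=\mathrm{sh}_e(\mathrm{gr}(\tilde\omega_{\mathrm{reg}_e(\lambda)}))$.
   Context: A partition of $n$ is a non-increasing sequence $\lambda=(\lambda_1\ge\dots\ge\lambda_h>0)$ of positive integers with sum $n$; $Y(\lambda)=\{(a,b):1\le a\le h,1\le b\le\lambda_a\}$. Node $(a,b)$ corresponds to the closed square with vertices $(a-b,a+b),(a-b\pm1,a+b-1),(a-b,a+b-2)$; $\omega_\lambda(x)=\max(|x|,\sup\{y:(x,y)\text{ lies in one of these squares}\})$ and $\tilde\omega_\lambda(s)=n^{-1/2}\omega_\lambda(s\sqrt n)$. The $e$-ladder number of a node $(a,b)$ is $a+(e-1)(b-1)$; $\mathrm{reg}_e(\lambda)$ is obtained by moving each node of $Y(\lambda)$ to the highest possible position (smallest row index) among nodes of the same ladder number. For a continuous $g:\mathbb R\to\mathbb R$ with $g\ge|\cdot|$, $g(x)=|x|$ for $|x|$ large and $g\ne|\cdot|$: $a_g=\inf\{x:g(x)\ne|x|\}$, $b_g=\sup\{x:g(x)\ne|x|\}$, $\mathrm{gr}(g)=\{(x,y)\in[a_g,b_g]\times\mathbb R_{\ge0}:|x|\le y\le g(x)\}$. Shaking: for $\alpha\ge0$, $D$ the line $y=-x$, $v_\alpha$ the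 unit vector positively collinear to $(1,\alpha)$; for compact $K\subseteq\mathbb R^2$, $\mathrm{Sh}_\alpha(K)=\bigcup_{p\in D}K^p$ with $K^p=\emptyset$ if $K\cap(p+\mathbb Rv_\alpha)=\emptyset$ and otherwise the segment from $p$ to $p+|K\cap(p+\mathbb Rv_\alpha)|\,v_\alpha$ ($|\cdot|$ one-dimensional Lebesgue measure). $\mathrm{sh}_e=\mathrm{Sh}_{1-2e^{-1}}$. *)

theory Defs
  imports "HOL-Analysis.Analysis"
begin

text \<open>Partitions are lists of positive naturals in non-increasing order.\<close>
definition is_partition :: "nat list \<Rightarrow> nat \<Rightarrow> bool" where
  "is_partition lam n \<longleftrightarrow> sorted_wrt (\<ge>) lam \<and> (\<forall>x\<in>set lam. 0 < x) \<and> sum_list lam = n"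

text \<open>Young diagram, nodes (a,b) with 1-based row a and column b.\<close>
definition young :: "nat list \<Rightarrow> (nat \<times> nat) set" where
  "young lam = {(a,b). 1 \<le> a \<and> a \<le> length lam \<and> 1 \<le> b \<and> b \<le> lam ! (a - 1)}"

text \<open>The closed square attached to node (a,b): vertices (a-b,a+b), (a-b+-1,a+b-1), (a-b,a+b-2).\<close>
definition node_square :: "nat \<times> nat \<Rightarrow> (real \<times> real) set" where
  "node_square p = (case p of (a,b) \<Rightarrow>
     {(x,y). \<bar>x - (real a - real b)\<bar> + \<bar>y - (real a + real b - 1)\<bar> \<le> 1})"

text \<open>Profile of a diagram given as a set of nodes:
  omega(x) = max(|x|, sup{y. (x,y) in some square}), with the sup ignored when empty.\<close>
definition omega_nodes :: "(nat \<times> nat) set \<Rightarrow> real \<Rightarrow> real" where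
  "omega_nodes Y x = (let S = {y. \<exists>p\<in>Y. (x,y) \<in> node_square p} in
     if S = {} then \<bar>x\<bar> else max \<bar>x\<bar> (Sup S))"

definition omega :: "nat list \<Rightarrow> real \<Rightarrow> real" where
  "omega lam = omega_nodes (young lam)"

text \<open>Rescaled profile omega~(s) = n^(-1/2) omega(s sqrt n); n is the size of the partition.\<close>
definition omega_tilde_nodes :: "nat \<Rightarrow> (nat \<times> nat) set \<Rightarrow> real \<Rightarrow> real" where
  "omega_tilde_nodes n Y s = omega_nodes Y (s * sqrt (real n)) / sqrt (real n)"

definition omega_tilde :: "nat \<Rightarrow> nat list \<Rightarrow> real \<Rightarrow> real" where
  "omega_tilde n lam = omega_tilde_nodes n (young lam)"

text \<open>e-ladder number of a node.\<close>
definition ladder :: "nat \<Rightarrow> nat \<times> nat \<Rightarrow> nat" where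
  "ladder e p = fst p + (e - 1) * (snd p - 1)"

text \<open>e-regularization of a set of nodes: on every ladder, keep as many nodes as the
  original diagram has on that ladder, placed in the highest possible positions
  (smallest row indices) among all nodes (a,b), a,b >= 1, of that ladder.\<close>
definition reg_nodes :: "nat \<Rightarrow> (nat \<times> nat) set \<Rightarrow> (nat \<times> nat) set" where
  "reg_nodes e Y = {(a,b). 1 \<le> a \<and> 1 \<le> b \<and>
     card {(a',b'). 1 \<le> a' \<and> 1 \<le> b' \<and> ladder e (a',b') = ladder e (a,b) \<and> a' \<le> a}
       \<le> card {q\<in>Y. ladder e q = ladder e (a,b)}}"

text \<open>The graph region gr(g).\<close>
definition gr_a :: "(real \<Rightarrow> real) \<Rightarrow> real" where
  "gr_a g = Inf {x. g x \<noteq> \<bar>x\<bar>}"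
definition gr_b :: "(real \<Rightarrow> real) \<Rightarrow> real" where
  "gr_b g = Sup {x. g x \<noteq> \<bar>x\<bar>}"
definition gr :: "(real \<Rightarrow> real) \<Rightarrow> (real \<times> real) set" where
  "gr g = {(x,y). gr_a g \<le> x \<and> x \<le> gr_b g \<and> 0 \<le> y \<and> \<bar>x\<bar> \<le> y \<and> y \<le> g x}"

text \<open>Shaking in direction v_alpha onto the line D: y = -x.\<close>
definition v_dir :: "real \<Rightarrow> real \<times> real" where
  "v_dir \<alpha> = (1 / sqrt (1 + \<alpha>\<^sup>2)) *\<^sub>R (1, \<alpha>)"

definition Sh :: "real \<Rightarrow> (real \<times> real) set \<Rightarrow> (real \<times> real) set" where
  "Sh \<alpha> K = (\<Union>p\<in>{p. snd p = - fst p}.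
      (if K \<inter> {p + t *\<^sub>R v_dir \<alpha> | t. True} = {} then {}
       else closed_segment p (p + measure lebesgue {t. p + t *\<^sub>R v_dir \<alpha> \<in> K} *\<^sub>R v_dir \<alpha>)))"

definition sh :: "nat \<Rightarrow> (real \<times> real) set \<Rightarrow> (real \<times> real) set" where
  "sh e = Sh (1 - 2 / real e)"

end

theory Submission
  imports Defs
begin


definition DC :: "(nat \<times> nat) set \<Rightarrow> bool" where
  "DC Y \<longleftrightarrow> (\<forall>a b. (a,b) \<in> Y \<longrightarrow> 1 \<le> a \<and> 1 \<le> b) \<and>
     (\<forall>a b a' b'. (a,b) \<in> Y \<longrightarrow> 1 \<le> a' \<longrightarrow> a' \<le> a \<longrightarrow> 1 \<le> b' \<longrightarrow> b' \<le> b \<longrightarrow> (a',b') \<in> Y)"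

definition cnt :: "nat \<Rightarrow> (nat \<times> nat) set \<Rightarrow> nat \<Rightarrow> nat" where
  "cnt e Y L = card {q\<in>Y. ladder e q = L}"

definition Vs :: "nat \<Rightarrow> nat \<Rightarrow> nat set" where
  "Vs e L = {b. 1 \<le> b \<and> (e-1)*(b-1) < L}"

definition Ws :: "nat \<Rightarrow> (nat \<times> nat) set \<Rightarrow> nat \<Rightarrow> nat set" where
  "Ws e Y L = {b. b \<in> Vs e L \<and> (L - (e-1)*(b-1), b) \<in> Y}"

lemma ladder_eq: "ladder e (a,b) = a + (e-1)*(b-1)"
  by (simp add: ladder_def)

lemma Vs_interval:
  assumes "e \<ge> 2" shows "\<exists>m. Vs e L = {1..m}"
proof (cases "L = 0")
  case True then show ?thesis by (intro exI[of _ 0]) (auto simp: Vs_def)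
next
  case False
  have E: "0 < e - 1" using assms by simp
  show ?thesis
  proof (intro exI[of _ "(L-1) div (e-1) + 1"] set_eqI iffI)
    fix b assume "b \<in> Vs e L"
    then have "1 \<le> b" "(b-1)*(e-1) \<le> L - 1" by (auto simp: Vs_def mult.commute)
    then show "b \<in> {1..(L-1) div (e-1) + 1}"
      using less_eq_div_iff_mult_less_eq[OF E, of "b-1" "L-1"] by auto
  next
    fix b assume "b \<in> {1..(L-1) div (e-1) + 1}"
    then have "1 \<le> b" "b - 1 \<le> (L-1) div (e-1)" by auto
    then have "(b-1)*(e-1) \<le> L - 1"
      using less_eq_div_iff_mult_less_eq[OF E, of "b-1" "L-1"] by auto
    then show "b \<in> Vs e L" using False \<open>1 \<le> b\<close> by (auto simp: Vs_def mult.commute)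
  qed
qed

definition Bc :: "nat \<Rightarrow> nat \<Rightarrow> nat" where "Bc e L = card (Vs e L)"

lemma Vs_eq: "e \<ge> 2 \<Longrightarrow> Vs e L = {1..Bc e L}"
proof -
  assume "e \<ge> 2"
  then obtain m where m: "Vs e L = {1..m}" using Vs_interval by blast
  then show ?thesis by (simp add: Bc_def)
qed

lemma finite_Vs: "e \<ge> 2 \<Longrightarrow> finite (Vs e L)"
  by (metis Vs_eq finite_atLeastAtMost)

lemma cnt_W:
  assumes pos: "\<forall>(a,b)\<in>Y. 1 \<le> a \<and> 1 \<le> b"
  shows "cnt e Y L = card (Ws e Y L)"
proof -
  have inj: "inj_on snd {q\<in>Y. ladder e q = L}"
  proof (rule inj_onI)
    fix q q' assume "q \<in> {q\<in>Y. ladder e q = L}" "q' \<in> {q\<in>Y. ladder e q = L}" "snd q = snd q'"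
    then show "q = q'" by (cases q; cases q'; simp add: ladder_eq)
  qed
  have "snd ` {q\<in>Y. ladder e q = L} = Ws e Y L"
  proof (intro set_eqI iffI)
    fix b assume "b \<in> snd ` {q\<in>Y. ladder e q = L}"
    then obtain a where ab: "(a,b) \<in> Y" "a + (e-1)*(b-1) = L" by (force simp: ladder_eq)
    moreover have "1 \<le> a" "1 \<le> b" using pos ab(1) by auto
    ultimately have "(e-1)*(b-1) < L \<and> L - (e-1)*(b-1) = a"
      using add_diff_cancel_left' less_add_same_cancel2 by (metis add.commute add_diff_cancel_right' le_eq_less_or_eq less_le_trans zero_less_one)
    then show "b \<in> Ws e Y L" using ab \<open>1 \<le> b\<close> by (simp add: Ws_def Vs_def)
  next
    fix b assume b: "b \<in> Ws e Y L"
    then have "(L - (e-1)*(b-1), b) \<in> {q\<in>Y. ladder e q = L}"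
      by (simp add: Ws_def Vs_def ladder_eq)
    then show "b \<in> snd ` {q\<in>Y. ladder e q = L}" by (rule image_eqI[rotated]) auto
  qed
  then show ?thesis using card_image[OF inj] by (simp add: cnt_def)
qed

lemma aux_lt: "1 \<le> (a::nat) \<Longrightarrow> a + P = L \<Longrightarrow> P < L" by linarith

lemma aux_h1: "(a'::nat) + P' = L \<Longrightarrow> L = a + P \<Longrightarrow> a' \<le> a \<Longrightarrow> P \<le> P'" by linarith
lemma aux_h2: "(P'::nat) < L \<Longrightarrow> P \<le> P' \<Longrightarrow> L = a + P \<Longrightarrow> 1 \<le> L - P' \<and> L - P' \<le> a \<and> L - P' + P' = L" by linarith

lemma rank_eq:
  assumes e: "e \<ge> 2" and ab: "1 \<le> a" "1 \<le> b"
  shows "card {(a',b'). 1 \<le> a' \<and> 1 \<le> b' \<and> ladder e (a',b') = ladder e (a,b) \<and> a' \<le> a}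
       = Bc e (ladder e (a,b)) + 1 - b"
proof -
  define L where "L = ladder e (a,b)"
  define S where "S = {(a',b'). 1 \<le> a' \<and> 1 \<le> b' \<and> ladder e (a',b') = L \<and> a' \<le> a}"
  have E: "0 < e - 1" using e by simp
  have L: "L = a + (e-1)*(b-1)" by (simp add: L_def ladder_eq)
  have inj: "inj_on snd S"
  proof (rule inj_onI)
    fix q q' assume "q \<in> S" "q' \<in> S" "snd q = snd q'"
    then show "q = q'" by (cases q; cases q'; simp add: S_def ladder_eq)
  qed
  have img: "snd ` S = {b'. b' \<in> Vs e L \<and> b \<le> b'}"
  proof (intro set_eqI iffI)
    fix b' assume "b' \<in> snd ` S"
    then obtain a' where "(a',b') \<in> S" by force
    then have a': "1 \<le> a'" "1 \<le> b'" "a' + (e-1)*(b'-1) = L" "a' \<le> a"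
      by (auto simp: S_def ladder_eq)
    have "(e-1)*(b-1) \<le> (e-1)*(b'-1)" using aux_h1[OF a'(3) L a'(4)] .
    then have "b - 1 \<le> b' - 1" using E by simp
    then have "b \<le> b'" using ab a' by simp
    moreover have "(e-1)*(b'-1) < L" using aux_lt[OF a'(1,3)] .
    ultimately show "b' \<in> {b'. b' \<in> Vs e L \<and> b \<le> b'}" using a'(2) by (simp add: Vs_def)
  next
    fix b' assume "b' \<in> {b'. b' \<in> Vs e L \<and> b \<le> b'}"
    then have b': "1 \<le> b'" "(e-1)*(b'-1) < L" "b \<le> b'" by (auto simp: Vs_def)
    have "(e-1)*(b-1) \<le> (e-1)*(b'-1)" using b' by (intro mult_le_mono2) simp
    from aux_h2[OF b'(2) this L]
    have "(L - (e-1)*(b'-1), b') \<in> S" using b'(1) by (simp add: S_def ladder_eq)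
    then show "b' \<in> snd ` S" by (rule image_eqI[rotated]) simp
  qed
  have "{b'. b' \<in> Vs e L \<and> b \<le> b'} = {b..Bc e L}"
    unfolding Vs_eq[OF e, of L] using ab by auto
  then have "card S = Bc e L + 1 - b"
    using card_image[OF inj] img by simp
  then show ?thesis by (simp add: S_def L_def)
qed

lemma reg_mem:
  assumes e: "e \<ge> 2"
  shows "(a,b) \<in> reg_nodes e Y \<longleftrightarrow> 1 \<le> a \<and> 1 \<le> b \<and>
     Bc e (a + (e-1)*(b-1)) + 1 - b \<le> cnt e Y (a + (e-1)*(b-1))"
proof -
  have "(a,b) \<in> reg_nodes e Y \<longleftrightarrow> 1 \<le> a \<and> 1 \<le> b \<and>
     card {(a',b'). 1 \<le> a' \<and> 1 \<le> b' \<and> ladder e (a',b') = ladder e (a,b) \<and> a' \<le> a}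
       \<le> cnt e Y (ladder e (a,b))"
    unfolding reg_nodes_def cnt_def by simp
  then show ?thesis using rank_eq[OF e, of a b] by (auto simp only: ladder_eq)
qed

lemma reg_pos: "(a,b) \<in> reg_nodes e Y \<Longrightarrow> 1 \<le> a \<and> 1 \<le> b"
  by (simp add: reg_nodes_def)

lemma Ws_sub: "Ws e Y L \<subseteq> Vs e L" by (auto simp: Ws_def)

lemma finite_Ws: "e \<ge> 2 \<Longrightarrow> finite (Ws e Y L)"
  using finite_Vs Ws_sub finite_subset by metis

lemma cnt_le:
  assumes e: "e \<ge> 2" and pos: "\<forall>(a,b)\<in>Y. 1 \<le> a \<and> 1 \<le> b"
  shows "cnt e Y L \<le> Bc e L"
  using cnt_W[OF pos] card_mono[OF finite_Vs[OF e] Ws_sub] by (simp add: Bc_def)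

lemma aux_h3: "(P::nat) < L \<Longrightarrow> 1 \<le> L - P \<and> L - P + P = L" by linarith

lemma cnt_reg:
  assumes e: "e \<ge> 2" and pos: "\<forall>(a,b)\<in>Y. 1 \<le> a \<and> 1 \<le> b"
  shows "cnt e (reg_nodes e Y) L = cnt e Y L"
proof -
  define B where "B = Bc e L"
  define c where "c = cnt e Y L"
  have cB: "c \<le> B" using cnt_le[OF e pos] by (simp add: B_def c_def)
  define S where "S = {q \<in> reg_nodes e Y. ladder e q = L}"
  have inj: "inj_on snd S"
  proof (rule inj_onI)
    fix q q' assume "q \<in> S" "q' \<in> S" "snd q = snd q'"
    then show "q = q'" by (cases q; cases q'; simp add: S_def ladder_eq)
  qed
  have img: "snd ` S = {B + 1 - c..B}"
  proof (intro set_eqI iffI)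
    fix b assume "b \<in> snd ` S"
    then obtain a where ab: "(a,b) \<in> reg_nodes e Y" "a + (e-1)*(b-1) = L"
      by (force simp: S_def ladder_eq)
    then have "1 \<le> a" "1 \<le> b" "B + 1 - b \<le> c"
      using reg_mem[OF e, of a b Y] by (auto simp: B_def c_def)
    moreover have "(e-1)*(b-1) < L" using aux_lt[OF \<open>1 \<le> a\<close> ab(2)] .
    then have "b \<in> Vs e L" using \<open>1 \<le> b\<close> by (simp add: Vs_def)
    then have "b \<le> B" using Vs_eq[OF e, of L] B_def by auto
    ultimately show "b \<in> {B + 1 - c..B}" by auto
  next
    fix b assume b: "b \<in> {B + 1 - c..B}"
    then have "b \<in> Vs e L" using cB Vs_eq[OF e, of L] B_def by auto
    then have b1: "1 \<le> b" "(e-1)*(b-1) < L" by (auto simp: Vs_def)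
    note h = aux_h3[OF b1(2)]
    have "B + 1 - b \<le> c" using b by auto
    then have "(L - (e-1)*(b-1), b) \<in> S"
      using b1 h reg_mem[OF e, of "L - (e-1)*(b-1)" b Y]
      by (simp add: S_def ladder_eq B_def c_def)
    then show "b \<in> snd ` S" by (rule image_eqI[rotated]) simp
  qed
  have "card S = c" using card_image[OF inj] img cB by simp
  then show ?thesis by (simp add: S_def c_def cnt_def)
qed

lemma DC_pos: "DC Y \<Longrightarrow> \<forall>(a,b)\<in>Y. 1 \<le> a \<and> 1 \<le> b"
  by (auto simp: DC_def)

lemma DC_down: "DC Y \<Longrightarrow> (a,b) \<in> Y \<Longrightarrow> 1 \<le> a' \<Longrightarrow> a' \<le> a \<Longrightarrow> 1 \<le> b' \<Longrightarrow> b' \<le> b \<Longrightarrow> (a',b') \<in> Y"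
  unfolding DC_def by blast

lemma aux_i1a: "(P::nat) < L - 1 \<Longrightarrow> 1 \<le> L - 1 - P \<and> L - 1 - P \<le> L - P" by linarith
lemma aux_i1b: "2 \<le> L \<Longrightarrow> (P::nat) < L - 1 \<longleftrightarrow> P < L \<and> P \<noteq> L - 1" by linarith

lemma reg_row:
  assumes e: "e \<ge> 2" and Y: "DC Y" and ab: "(a,b) \<in> reg_nodes e Y" and a2: "a \<ge> 2"
  shows "(a-1,b) \<in> reg_nodes e Y"
proof -
  have pos: "\<forall>(a,b)\<in>Y. 1 \<le> a \<and> 1 \<le> b" using DC_pos[OF Y] .
  define E where "E = e - 1"
  have E: "0 < E" using e by (simp add: E_def)
  define L where "L = a + E*(b-1)"
  have b1: "1 \<le> b" and ineq: "Bc e L + 1 - b \<le> cnt e Y L"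
    using ab reg_mem[OF e, of a b Y] by (auto simp: L_def E_def)
  define L1 where "L1 = (a-1) + E*(b-1)"
  have L1: "L1 = L - 1" "L \<ge> 2" using a2 by (auto simp: L_def L1_def)
  define Z where "Z = {b'. 1 \<le> b' \<and> E*(b'-1) = L - 1}"
  have VsE: "Vs e M = {b. 1 \<le> b \<and> E*(b-1) < M}" for M by (simp add: Vs_def E_def)
  have WsE: "Ws e Y M = {b. b \<in> Vs e M \<and> (M - E*(b-1), b) \<in> Y}" for M by (simp add: Ws_def E_def)
  have V1: "Vs e L1 = Vs e L - Z"
    unfolding VsE Z_def L1(1) using aux_i1b[OF L1(2)] by blast
  have WZ: "Ws e Y L - Z \<subseteq> Ws e Y L1"
  proof
    fix b' assume "b' \<in> Ws e Y L - Z"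
    then have b': "1 \<le> b'" "E*(b'-1) < L" "(L - E*(b'-1), b') \<in> Y" "E*(b'-1) \<noteq> L - 1"
      by (auto simp: WsE VsE Z_def)
    then have lt: "E*(b'-1) < L - 1" using aux_i1b[OF L1(2)] by blast
    have "(L - 1 - E*(b'-1), b') \<in> Y"
      using DC_down[OF Y b'(3)] aux_i1a[OF lt] b'(1) by blast
    then show "b' \<in> Ws e Y L1" using lt b'(1) by (simp add: WsE VsE L1(1))
  qed
  have Zs: "\<And>x y. x \<in> Z \<Longrightarrow> y \<in> Z \<Longrightarrow> x = y"
  proof -
    fix x y assume "x \<in> Z" "y \<in> Z"
    then have "E*(x-1) = E*(y-1)" "1 \<le> x" "1 \<le> y" by (auto simp: Z_def)
    then show "x = y" using E by simp
  qed
  have ZV: "Z \<subseteq> Vs e L" using L1(2) by (auto simp: Z_def VsE)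
  have fW1: "finite (Ws e Y L1)" by (rule finite_Ws[OF e])
  have goal: "Bc e L1 + 1 - b \<le> card (Ws e Y L1)"
  proof (cases "Z = {}")
    case True
    then have "Bc e L1 = Bc e L" using V1 by (simp add: Bc_def)
    moreover have "card (Ws e Y L) \<le> card (Ws e Y L1)"
      using WZ True fW1 by (intro card_mono) auto
    ultimately show ?thesis using ineq cnt_W[OF pos] by simp
  next
    case False
    then obtain z where z: "z \<in> Z" by blast
    then have Zz: "Z = {z}" using Zs by blast
    have zV: "z \<in> Vs e L" using ZV z by blast
    have "Bc e L1 = Bc e L - 1" using V1 Zz zV finite_Vs[OF e] by (simp add: Bc_def)
    moreover have "Bc e L \<ge> 1" using zV finite_Vs[OF e, of L]
      by (simp add: Bc_def Suc_le_eq card_gt_0_iff) blast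
    moreover have "card (Ws e Y L - {z}) \<le> card (Ws e Y L1)"
      using WZ Zz fW1 by (intro card_mono) auto
    moreover have "card (Ws e Y L) - 1 \<le> card (Ws e Y L - {z})"
      by (simp add: card_Diff_singleton_if)
    ultimately show ?thesis using ineq cnt_W[OF pos] by simp
  qed
  have "1 \<le> a - 1" using a2 by simp
  then show ?thesis using goal b1 reg_mem[OF e, of "a-1" b Y] cnt_W[OF pos]
    by (simp add: L1_def E_def)
qed

lemma aux_i2a: "P = Q + (E::nat) \<Longrightarrow> P < L \<Longrightarrow> L = L' + E \<Longrightarrow> Q < L' \<and> L' - Q = L - P" by linarith
lemma aux_i2b: "P + (E::nat) \<le> R \<Longrightarrow> R < L \<Longrightarrow> L = L' + E \<Longrightarrow> P < L' \<and> 1 \<le> L' - P \<and> L' - P \<le> L - P" by linarith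
lemma aux_mulsuc: "1 \<le> (b::nat) \<Longrightarrow> E * b = E * (b - 1) + E"
  by (cases b) auto

lemma reg_col:
  assumes e: "e \<ge> 2" and Y: "DC Y" and ab: "(a,b) \<in> reg_nodes e Y" and b2: "b \<ge> 2"
  shows "(a,b-1) \<in> reg_nodes e Y"
proof -
  have pos: "\<forall>(a,b)\<in>Y. 1 \<le> a \<and> 1 \<le> b" using DC_pos[OF Y] .
  define E where "E = e - 1"
  have E: "0 < E" using e by (simp add: E_def)
  define L where "L = a + E*(b-1)"
  have a1: "1 \<le> a" and ineq: "Bc e L + 1 - b \<le> cnt e Y L"
    using ab reg_mem[OF e, of a b Y] by (auto simp: L_def E_def)
  define L' where "L' = a + E*(b-1-1)"
  have "E*(b-1) = E*(b-1-1) + E" using aux_mulsuc[of "b-1" E] b2 by simp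
  then have LL: "L = L' + E" by (simp add: L_def L'_def)
  have VsE: "Vs e M = {b. 1 \<le> b \<and> E*(b-1) < M}" for M by (simp add: Vs_def E_def)
  have WsE: "Ws e Y M = {b. b \<in> Vs e M \<and> (M - E*(b-1), b) \<in> Y}" for M by (simp add: Ws_def E_def)
  have L1: "1 \<le> L" using a1 by (simp add: L_def)
  have V: "Vs e L = insert 1 (Suc ` Vs e L')"
  proof (intro set_eqI iffI)
    fix x assume x: "x \<in> Vs e L"
    show "x \<in> insert 1 (Suc ` Vs e L')"
    proof (cases "x = 1")
      case False
      then obtain k where k: "x = Suc k" "1 \<le> k" using x by (cases x) (auto simp: VsE)
      have "E*(x-1) = E*(k-1) + E" using aux_mulsuc[OF k(2)] k(1) by simp
      then have "k \<in> Vs e L'" using x aux_i2a[of "E*(x-1)" "E*(k-1)" E L L'] LL k(2) by (simp add: VsE)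
      then show ?thesis using k(1) by blast
    qed simp
  next
    fix x assume "x \<in> insert 1 (Suc ` Vs e L')"
    then show "x \<in> Vs e L"
    proof
      assume "x = 1" then show ?thesis using L1 by (simp add: VsE)
    next
      assume "x \<in> Suc ` Vs e L'"
      then obtain k where k: "x = Suc k" "k \<in> Vs e L'" by blast
      then have k1: "1 \<le> k" "E*(k-1) < L'" by (auto simp: VsE)
      have "E*k = E*(k-1) + E" using aux_mulsuc[OF k1(1)] .
      then show ?thesis using k k1 LL by (simp add: VsE)
    qed
  qed
  have "1 \<notin> Suc ` Vs e L'" by (auto simp: VsE)
  then have BcL: "Bc e L = Bc e L' + 1" using V finite_Vs[OF e, of L']
    by (simp add: Bc_def card_image)
  have bV: "b \<in> Vs e L" using aux_lt[OF a1] b2 by (simp add: VsE L_def)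
  then have bB: "b \<le> Bc e L" using Vs_eq[OF e, of L] by simp
  have split: "card (Ws e Y L - {t}) \<le> card (Ws e Y L')" if t: "t \<in> Vs e L" for t
  proof -
    define f where "f x = (if x < t then x else x - 1)" for x :: nat
    have inj: "inj_on f (Ws e Y L - {t})"
    proof (rule inj_onI)
      fix x y assume "x \<in> Ws e Y L - {t}" "y \<in> Ws e Y L - {t}" "f x = f y"
      then show "x = y" by (auto simp: f_def split: if_splits)
    qed
    have sub: "f ` (Ws e Y L - {t}) \<subseteq> Ws e Y L'"
    proof
      fix y assume "y \<in> f ` (Ws e Y L - {t})"
      then obtain x where x: "x \<in> Ws e Y L" "x \<noteq> t" "y = f x" by blast
      then have x1: "1 \<le> x" "E*(x-1) < L" "(L - E*(x-1), x) \<in> Y" by (auto simp: WsE VsE)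
      have t1: "1 \<le> t" "E*(t-1) < L" using t by (auto simp: VsE)
      show "y \<in> Ws e Y L'"
      proof (cases "x < t")
        case True
        then have "E*x \<le> E*(t-1)" by (intro mult_le_mono2) simp
        moreover have "E*x = E*(x-1) + E" using aux_mulsuc[OF x1(1)] .
        ultimately have h: "E*(x-1) < L' \<and> 1 \<le> L' - E*(x-1) \<and> L' - E*(x-1) \<le> L - E*(x-1)"
          using aux_i2b[of "E*(x-1)" E "E*(t-1)" L L'] t1(2) LL by simp
        then have "(L' - E*(x-1), x) \<in> Y" using DC_down[OF Y x1(3)] x1(1) by blast
        then show ?thesis using True x(3) h x1(1) by (simp add: f_def WsE VsE)
      next
        case False
        then have x2: "x \<ge> 2" "x - 1 \<ge> 1" using x(2) t1(1) by auto
        have "E*(x-1) = E*(x-1-1) + E" using aux_mulsuc[OF x2(2)] .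
        then have h: "E*(x-1-1) < L' \<and> L' - E*(x-1-1) = L - E*(x-1)"
          using aux_i2a[of "E*(x-1)" "E*(x-1-1)" E L L'] x1(2) LL by simp
        have "(L - E*(x-1), x-1) \<in> Y" using DC_down[OF Y x1(3)] x1 x2 by simp
        then show ?thesis using False x(3) h x2 by (simp add: f_def WsE VsE)
      qed
    qed
    have "card (f ` (Ws e Y L - {t})) \<le> card (Ws e Y L')"
      using sub finite_Ws[OF e] by (intro card_mono) auto
    then show ?thesis using card_image[OF inj] by simp
  qed
  have cW: "cnt e Y M = card (Ws e Y M)" for M using cnt_W[OF pos] .
  have goal: "Bc e L' + 1 - (b-1) \<le> card (Ws e Y L')"
  proof (cases "\<exists>t\<in>Vs e L. t \<notin> Ws e Y L")
    case True
    then obtain t where "t \<in> Vs e L" "t \<notin> Ws e Y L" by blast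
    then have "card (Ws e Y L) \<le> card (Ws e Y L')" using split[of t] by simp
    then show ?thesis using ineq cW BcL b2 bB by simp
  next
    case False
    then have "Ws e Y L = Vs e L" using Ws_sub by blast
    then have cWL: "card (Ws e Y L) = Bc e L" by (simp add: Bc_def)
    have "1 \<in> Vs e L" using L1 by (simp add: VsE)
    then have "card (Ws e Y L - {1}) \<le> card (Ws e Y L')" using split by blast
    moreover have "card (Ws e Y L) - 1 \<le> card (Ws e Y L - {1})"
      by (simp add: card_Diff_singleton_if)
    ultimately show ?thesis using cWL BcL b2 bB by simp
  qed
  then show ?thesis using a1 b2 reg_mem[OF e, of a "b-1" Y] cnt_W[OF pos]
    by (simp add: L'_def E_def)
qed

lemma DC_intro:
  assumes pos: "\<forall>(a,b)\<in>Y. 1 \<le> a \<and> 1 \<le> b"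
    and row: "\<And>a b. (a,b) \<in> Y \<Longrightarrow> a \<ge> 2 \<Longrightarrow> (a-1,b) \<in> Y"
    and col: "\<And>a b. (a,b) \<in> Y \<Longrightarrow> b \<ge> 2 \<Longrightarrow> (a,b-1) \<in> Y"
  shows "DC Y"
proof -
  have R: "(a,b) \<in> Y \<Longrightarrow> k < a \<Longrightarrow> (a - k, b) \<in> Y" for k a b
  proof (induction k)
    case (Suc k)
    then have h: "(a - k, b) \<in> Y" by linarith
    have "a - k \<ge> 2" using Suc.prems by linarith
    from row[OF h this] have "(a - k - 1, b) \<in> Y" .
    moreover have "a - k - 1 = a - Suc k" by simp
    ultimately show ?case by simp
  qed simp
  have C: "(a,b) \<in> Y \<Longrightarrow> k < b \<Longrightarrow> (a, b - k) \<in> Y" for k a b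
  proof (induction k)
    case (Suc k)
    then have h: "(a, b - k) \<in> Y" by linarith
    have "b - k \<ge> 2" using Suc.prems by linarith
    from col[OF h this] have "(a, b - k - 1) \<in> Y" .
    moreover have "b - k - 1 = b - Suc k" by simp
    ultimately show ?case by simp
  qed simp
  show ?thesis unfolding DC_def
  proof (intro conjI allI impI)
    fix a b assume "(a,b) \<in> Y" then show "1 \<le> a" "1 \<le> b" using pos by auto
  next
    fix a b a' b' assume h: "(a,b) \<in> Y" "1 \<le> a'" "a' \<le> a" "1 \<le> b'" "b' \<le> b"
    have "(a - (a - a'), b) \<in> Y" using R[OF h(1), of "a - a'"] h(2,3) by linarith
    moreover have "a - (a - a') = a'" using h(3) by simp
    ultimately have h2: "(a', b) \<in> Y" by simp
    have "(a', b - (b - b')) \<in> Y" using C[OF h2, of "b - b'"] h(4,5) by linarith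
    moreover have "b - (b - b') = b'" using h(5) by simp
    ultimately show "(a', b') \<in> Y" by simp
  qed
qed

lemma reg_DC:
  assumes e: "e \<ge> 2" and Y: "DC Y"
  shows "DC (reg_nodes e Y)"
proof (rule DC_intro)
  show "\<forall>(a,b)\<in>reg_nodes e Y. 1 \<le> a \<and> 1 \<le> b" using reg_pos by blast
next
  fix a b assume "(a,b) \<in> reg_nodes e Y" "a \<ge> 2"
  then show "(a-1,b) \<in> reg_nodes e Y" by (rule reg_row[OF e Y])
next
  fix a b assume "(a,b) \<in> reg_nodes e Y" "b \<ge> 2"
  then show "(a,b-1) \<in> reg_nodes e Y" by (rule reg_col[OF e Y])
qed

lemma aux_le: "1 \<le> (a::nat) \<Longrightarrow> 1 \<le> b \<Longrightarrow> b - 1 \<le> P \<Longrightarrow> a \<le> a + P \<and> b \<le> a + P" by linarith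

lemma reg_finite:
  assumes e: "e \<ge> 2" and Y: "DC Y" and fin: "finite Y"
  shows "finite (reg_nodes e Y)"
proof -
  define M where "M = Max (ladder e ` Y)"
  have "reg_nodes e Y \<subseteq> {..M} \<times> {..M}"
  proof
    fix q assume q: "q \<in> reg_nodes e Y"
    obtain a b where qab: "q = (a,b)" by (cases q)
    have ab: "1 \<le> a" "1 \<le> b" using q qab reg_pos by auto
    define L where "L = a + (e-1)*(b-1)"
    have ineq: "Bc e L + 1 - b \<le> cnt e Y L" using q qab reg_mem[OF e, of a b Y] by (simp add: L_def)
    have "b \<in> Vs e L" using aux_lt[OF ab(1)] ab(2) by (simp add: Vs_def L_def)
    then have "b \<le> Bc e L" using Vs_eq[OF e, of L] by simp
    then have "cnt e Y L \<noteq> 0" using ineq by simp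
    then obtain p where p: "p \<in> Y" "ladder e p = L" unfolding cnt_def by (metis (mono_tags, lifting) Collect_empty_eq card.empty)
    then have "L \<le> M" unfolding M_def using fin by (metis Max_ge finite_imageI image_eqI)
    moreover have "b - 1 \<le> (e-1)*(b-1)" using mult_le_mono1[of 1 "e-1" "b-1"] e by linarith
    then have "a \<le> L \<and> b \<le> L" using aux_le[OF ab] by (simp add: L_def)
    ultimately show "q \<in> {..M} \<times> {..M}" using qab by simp
  qed
  then show ?thesis by (rule finite_subset) simp
qed

lemma reg_nonempty:
  assumes e: "e \<ge> 2" and Y: "DC Y" and fin: "finite Y" and ne: "Y \<noteq> {}"
  shows "reg_nodes e Y \<noteq> {}"
proof -
  obtain q where q: "q \<in> Y" using ne by blast
  have fin': "finite {p\<in>Y. ladder e p = ladder e q}" using fin by simp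
  have "q \<in> {p\<in>Y. ladder e p = ladder e q}" using q by simp
  then have "cnt e Y (ladder e q) \<noteq> 0" using card_0_eq[OF fin'] unfolding cnt_def by blast
  then have "cnt e (reg_nodes e Y) (ladder e q) \<noteq> 0" using cnt_reg[OF e DC_pos[OF Y]] by simp
  then show ?thesis unfolding cnt_def by (metis (mono_tags, lifting) Collect_empty_eq card.empty empty_iff)
qed

lemma young_DC:
  assumes "is_partition lam n"
  shows "DC (young lam)"
  unfolding DC_def
proof (intro conjI allI impI)
  fix a b assume "(a,b) \<in> young lam" then show "1 \<le> a" "1 \<le> b" by (auto simp: young_def)
next
  fix a b a' b' assume h: "(a,b) \<in> young lam" "1 \<le> a'" "a' \<le> a" "1 \<le> b'" "b' \<le> b"
  have s: "sorted_wrt (\<ge>) lam" using assms by (simp add: is_partition_def)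
  have "lam ! (a-1) \<le> lam ! (a'-1)"
  proof (cases "a' = a")
    case False
    then have "a' - 1 < a - 1" "a - 1 < length lam" using h by (auto simp: young_def)
    then show ?thesis using sorted_wrt_nth_less[OF s] by blast
  qed simp
  then show "(a',b') \<in> young lam" using h by (auto simp: young_def)
qed

lemma young_finite: "is_partition lam n \<Longrightarrow> finite (young lam)"
proof -
  assume "is_partition lam n"
  have "young lam \<subseteq> {..length lam} \<times> {..sum_list lam}"
  proof
    fix q assume "q \<in> young lam"
    then obtain a b where q: "q = (a,b)" "1 \<le> a" "a \<le> length lam" "b \<le> lam ! (a-1)"
      by (auto simp: young_def)
    then have "lam ! (a-1) \<in> set lam" by simp
    then have "lam ! (a-1) \<le> sum_list lam" using member_le_sum_list[of "lam!(a-1)" lam] by simp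
    then show "q \<in> {..length lam} \<times> {..sum_list lam}" using q by simp
  qed
  then show ?thesis by (rule finite_subset) simp
qed

lemma young_nonempty: "is_partition lam n \<Longrightarrow> lam \<noteq> [] \<Longrightarrow> young lam \<noteq> {}"
proof -
  assume "is_partition lam n" "lam \<noteq> []"
  then have "lam ! 0 \<in> set lam" by simp
  then have "0 < lam ! 0" using \<open>is_partition lam n\<close> by (auto simp: is_partition_def)
  moreover have "1 \<le> length lam" using \<open>lam \<noteq> []\<close> by (simp add: Suc_le_eq)
  ultimately have "(1,1) \<in> young lam" by (simp add: young_def)
  then show ?thesis by blast
qed



lemma sq_char: "(x,y) \<in> node_square (a,b) \<longleftrightarrow>
  2*real a - 2 \<le> x + y \<and> x + y \<le> 2*real a \<and> 2*real b - 2 \<le> y - x \<and> y - x \<le> 2*real b"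
  unfolding node_square_def by (auto simp: abs_if)

definition Sx :: "(nat \<times> nat) set \<Rightarrow> real \<Rightarrow> real set" where
  "Sx Y x = {y. \<exists>p\<in>Y. (x,y) \<in> node_square p}"

lemma omega_eq: "omega_nodes Y x = (if Sx Y x = {} then \<bar>x\<bar> else max \<bar>x\<bar> (Sup (Sx Y x)))"
  by (simp add: omega_nodes_def Sx_def Let_def)

lemma slice_eq: "{y. (x,y) \<in> node_square (a,b)} =
   {max (2*real a - 2 - x) (2*real b - 2 + x) .. min (2*real a - x) (2*real b + x)}"
  by (auto simp: sq_char)

lemma Sx_compact:
  assumes "finite Y" shows "compact (Sx Y x)"
proof -
  have "Sx Y x = (\<Union>p\<in>Y. {y. (x,y) \<in> node_square p})" by (auto simp: Sx_def)
  moreover have "compact {y. (x,y) \<in> node_square p}" for p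
    by (cases p) (simp only: slice_eq compact_Icc)
  ultimately show ?thesis using assms by (simp add: compact_UN)
qed

lemma Sx_bdd: "finite Y \<Longrightarrow> bdd_above (Sx Y x)"
  by (intro bounded_imp_bdd_above compact_imp_bounded Sx_compact)

lemma omega_ge_abs: "\<bar>x\<bar> \<le> omega_nodes Y x"
  by (simp add: omega_eq)

lemma omega_ge_y:
  assumes "finite Y" "p \<in> Y" "(x,y) \<in> node_square p"
  shows "y \<le> omega_nodes Y x"
proof -
  have y: "y \<in> Sx Y x" using assms by (auto simp: Sx_def)
  then have "y \<le> Sup (Sx Y x)" using Sx_bdd[OF assms(1)] by (intro cSup_upper)
  then show ?thesis using y by (auto simp: omega_eq)
qed

lemma omega_attain:
  assumes "finite Y" "omega_nodes Y x \<noteq> \<bar>x\<bar>"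
  shows "\<exists>p\<in>Y. (x, omega_nodes Y x) \<in> node_square p"
proof -
  have ne: "Sx Y x \<noteq> {}" using assms(2) by (auto simp: omega_eq)
  then have om: "omega_nodes Y x = Sup (Sx Y x)" using assms(2) by (auto simp: omega_eq max_def split: if_splits)
  have "Sup (Sx Y x) \<in> Sx Y x"
    using ne Sx_bdd[OF assms(1)] compact_imp_closed[OF Sx_compact[OF assms(1)]]
    by (rule closed_contains_Sup)
  then show ?thesis using om by (auto simp: Sx_def)
qed

lemma sq_pos:
  assumes "(x,y) \<in> node_square (a,b)" "1 \<le> a" "1 \<le> b"
  shows "\<bar>x\<bar> \<le> y"
proof -
  have "real a \<ge> 1" "real b \<ge> 1" using assms by auto
  then show ?thesis using assms(1) by (auto simp: sq_char abs_if)
qed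

lemma ceil_pick:
  assumes "0 \<le> u" "u \<le> real a" "1 \<le> a"
  shows "\<exists>k::nat. 1 \<le> k \<and> k \<le> a \<and> real k - 1 \<le> u \<and> u \<le> real k"
proof (cases "u \<le> 1")
  case True then show ?thesis using assms by (intro exI[of _ 1]) auto
next
  case False
  define k where "k = nat \<lceil>u\<rceil>"
  have rk: "real k = of_int \<lceil>u\<rceil>" using False by (simp add: k_def)
  have "\<lceil>u\<rceil> \<le> int a" using assms(2) ceiling_le[of u "int a"] by simp
  then have "k \<le> a" using assms(2) by (simp add: k_def)
  moreover have "1 \<le> k" using False rk by linarith
  moreover have "real k - 1 \<le> u" "u \<le> real k" using rk by (linarith, linarith)
  ultimately show ?thesis by blast
qed

lemma fill:
  assumes Y: "DC Y" and ab: "(a,b) \<in> Y"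
    and h: "0 \<le> x + y" "x + y \<le> 2 * real a" "0 \<le> y - x" "y - x \<le> 2 * real b"
  shows "\<exists>q\<in>Y. (x,y) \<in> node_square q"
proof -
  have ab1: "1 \<le> a" "1 \<le> b" using DC_pos[OF Y] ab by auto
  obtain k where k: "1 \<le> k" "k \<le> a" "real k - 1 \<le> (x+y)/2" "(x+y)/2 \<le> real k"
    using ceil_pick[of "(x+y)/2" a] h ab1 by auto
  obtain l where l: "1 \<le> l" "l \<le> b" "real l - 1 \<le> (y-x)/2" "(y-x)/2 \<le> real l"
    using ceil_pick[of "(y-x)/2" b] h ab1 by auto
  have "(k,l) \<in> Y" using DC_down[OF Y ab k(1,2) l(1,2)] .
  moreover have "(x,y) \<in> node_square (k,l)" using k l by (simp add: sq_char)
  ultimately show ?thesis by blast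
qed

definition sqc :: "real \<Rightarrow> nat \<times> nat \<Rightarrow> (real \<times> real) set" where
  "sqc c q = {z. (fst z / c, snd z / c) \<in> node_square q}"

lemma gr_omega:
  assumes Y: "DC Y" and fin: "finite Y" and ne: "Y \<noteq> {}" and c: "0 < c"
  shows "gr (\<lambda>x. c * omega_nodes Y (x / c)) = (\<Union>q\<in>Y. sqc c q)"
proof -
  define \<omega> where "\<omega> = omega_nodes Y"
  define g where "g = (\<lambda>x. c * \<omega> (x / c))"
  define U where "U = {x. g x \<noteq> \<bar>x\<bar>}"
  have pos: "\<And>a b. (a,b) \<in> Y \<Longrightarrow> 1 \<le> real a \<and> 1 \<le> real b" using DC_pos[OF Y] by auto
  have U_iff: "x \<in> U \<longleftrightarrow> \<omega> (x/c) \<noteq> \<bar>x/c\<bar>" for x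
  proof -
    have "c * \<omega> (x/c) = \<bar>x\<bar> \<longleftrightarrow> \<omega> (x/c) = \<bar>x\<bar> / c" using c by (auto simp: field_simps)
    then show ?thesis using c by (simp add: U_def g_def)
  qed
  define A where "A = Max (fst ` Y)"
  define Bm where "Bm = Max (snd ` Y)"
  have "A \<in> fst ` Y" using fin ne by (simp add: A_def)
  then obtain bA where A: "(A, bA) \<in> Y" by force
  have "Bm \<in> snd ` Y" using fin ne by (simp add: Bm_def)
  then obtain aB where B: "(aB, Bm) \<in> Y" by force
  have leA: "a \<le> A" if "(a,b) \<in> Y" for a b
  proof -
    have "a \<in> fst ` Y" using that by force
    then show ?thesis unfolding A_def using fin by (intro Max_ge) auto
  qed
  have leB: "b \<le> Bm" if "(a,b) \<in> Y" for a b
  proof -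
    have "b \<in> snd ` Y" using that by force
    then show ?thesis unfolding Bm_def using fin by (intro Max_ge) auto
  qed
  have U_bd: "- c * real Bm \<le> x \<and> x \<le> c * real A" if x: "x \<in> U" for x
  proof -
    define X where "X = x / c"
    have "\<omega> X \<noteq> \<bar>X\<bar>" using x U_iff X_def by simp
    then obtain p where p: "p \<in> Y" "(X, \<omega> X) \<in> node_square p"
      using omega_attain[OF fin] \<omega>_def by blast
    obtain a b where ab: "p = (a,b)" by (cases p)
    have "real a \<le> real A" "real b \<le> real Bm" using leA leB p(1) ab by auto
    moreover have "1 \<le> real a" "1 \<le> real b" using pos p(1) ab by auto
    ultimately have "- real Bm \<le> X" "X \<le> real A" using p(2) ab by (auto simp: sq_char)
    moreover have "x = c * X" using c by (simp add: X_def)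
    ultimately show ?thesis using c mult_left_mono[of "- real Bm" X c] mult_left_mono[of X "real A" c] by simp
  qed
  have U_in: "x \<in> U" if ab: "(a,b) \<in> Y" and d: "\<bar>x/c - (real a - real b)\<bar> < 1" for a b x
  proof -
    define X where "X = x / c"
    define y0 where "y0 = real a + real b - \<bar>X - (real a - real b)\<bar>"
    have ab1: "1 \<le> real a" "1 \<le> real b" using pos ab by auto
    have d': "\<bar>X - (real a - real b)\<bar> < 1" using d X_def by simp
    have sq: "(X, y0) \<in> node_square (a,b)" using d' by (auto simp: sq_char y0_def abs_if)
    have "\<bar>X\<bar> < y0" using d' ab1 by (auto simp: y0_def abs_if)
    moreover have "y0 \<le> \<omega> X" using omega_ge_y[OF fin ab sq] \<omega>_def by simp
    ultimately show ?thesis using U_iff X_def by simp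
  qed
  obtain a0 b0 where ab0: "(a0,b0) \<in> Y" using ne by auto
  have Une: "U \<noteq> {}" using U_in[OF ab0, of "c * (real a0 - real b0)"] c by auto
  have bddb: "bdd_below U" using U_bd by (auto intro!: bdd_belowI)
  have bdda: "bdd_above U" using U_bd by (auto intro!: bdd_aboveI)
  have InfL: "- c * real Bm \<le> Inf U" using Une U_bd by (intro cInf_greatest) auto
  have SupL: "Sup U \<le> c * real A" using Une U_bd by (intro cSup_least) auto
  have InfU: "Inf U \<le> c * (real a - real b - 1)" if ab: "(a,b) \<in> Y" for a b
  proof (rule field_le_epsilon)
    fix \<epsilon> :: real assume \<epsilon>: "0 < \<epsilon>"
    define m where "m = min \<epsilon> c"
    have m: "0 < m" "m \<le> c" "m \<le> \<epsilon>" using \<epsilon> c by (auto simp: m_def)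
    define z where "z = c * (real a - real b - 1) + m"
    have "z / c = real a - real b - 1 + m / c" using c by (simp add: z_def field_simps)
    moreover have "0 < m / c" "m / c \<le> 1" using m c by auto
    ultimately have "\<bar>z/c - (real a - real b)\<bar> < 1" by auto
    then have "z \<in> U" using U_in[OF ab] by blast
    then have "Inf U \<le> z" using bddb by (intro cInf_lower)
    then show "Inf U \<le> c * (real a - real b - 1) + \<epsilon>" using m by (simp add: z_def)
  qed
  have SupU: "c * (real a - real b + 1) \<le> Sup U" if ab: "(a,b) \<in> Y" for a b
  proof (rule field_le_epsilon)
    fix \<epsilon> :: real assume \<epsilon>: "0 < \<epsilon>"
    define m where "m = min \<epsilon> c"
    have m: "0 < m" "m \<le> c" "m \<le> \<epsilon>" using \<epsilon> c by (auto simp: m_def)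
    define z where "z = c * (real a - real b + 1) - m"
    have "z / c = real a - real b + 1 - m / c" using c by (simp add: z_def field_simps)
    moreover have "0 < m / c" "m / c \<le> 1" using m c by auto
    ultimately have "\<bar>z/c - (real a - real b)\<bar> < 1" by auto
    then have "z \<in> U" using U_in[OF ab] by blast
    then have "z \<le> Sup U" using bdda by (intro cSup_upper)
    then show "c * (real a - real b + 1) \<le> Sup U + \<epsilon>" using m by (simp add: z_def)
  qed
  have grg: "gr g = {(x,y). Inf U \<le> x \<and> x \<le> Sup U \<and> 0 \<le> y \<and> \<bar>x\<bar> \<le> y \<and> y \<le> g x}"
    by (simp add: gr_def gr_a_def gr_b_def U_def)
  have "gr g = (\<Union>q\<in>Y. sqc c q)"
  proof (intro set_eqI iffI)
    fix z assume "z \<in> gr g"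
    then obtain x y where z: "z = (x,y)" and h: "Inf U \<le> x" "x \<le> Sup U" "0 \<le> y" "\<bar>x\<bar> \<le> y" "y \<le> g x"
      by (auto simp: grg)
    define X where "X = x / c"
    define Yv where "Yv = y / c"
    have xX: "x = c * X" "y = c * Yv" using c by (auto simp: X_def Yv_def)
    have h1: "\<bar>X\<bar> \<le> Yv" using h(4) c xX by (simp add: abs_mult)
    have h2: "Yv \<le> \<omega> X" using h(5) c xX by (simp add: g_def)
    have "c * (- real Bm) \<le> c * X" "c * X \<le> c * real A" using h(1,2) InfL SupL xX by auto
    then have h3: "- real Bm \<le> X" "X \<le> real A"
      using mult_le_cancel_left_pos[OF c, THEN iffD1] by blast+
    have "\<exists>q\<in>Y. (X,Yv) \<in> node_square q"
    proof (cases "\<omega> X = \<bar>X\<bar>")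
      case False
      then obtain p where p: "p \<in> Y" "(X, \<omega> X) \<in> node_square p"
        using omega_attain[OF fin] \<omega>_def by blast
      obtain a b where ab: "p = (a,b)" by (cases p)
      show ?thesis
        using fill[OF Y p(1)[unfolded ab]] p(2) ab h1 h2 by (auto simp: sq_char)
    next
      case True
      then have Yv: "Yv = \<bar>X\<bar>" using h1 h2 by simp
      show ?thesis
      proof (cases "0 \<le> X")
        case True
        then show ?thesis using fill[OF Y A, of X Yv] Yv h3 by simp
      next
        case False
        then show ?thesis using fill[OF Y B, of X Yv] Yv h3 by simp
      qed
    qed
    then show "z \<in> (\<Union>q\<in>Y. sqc c q)" using z by (auto simp: sqc_def X_def Yv_def)
  next
    fix z assume "z \<in> (\<Union>q\<in>Y. sqc c q)"
    then obtain a b x y where z: "z = (x,y)" and ab: "(a,b) \<in> Y" and sq: "(x/c, y/c) \<in> node_square (a,b)"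
      by (cases z) (auto simp: sqc_def)
    define X where "X = x / c"
    define Yv where "Yv = y / c"
    have xX: "x = c * X" "y = c * Yv" using c by (auto simp: X_def Yv_def)
    have sq': "(X,Yv) \<in> node_square (a,b)" using sq by (simp add: X_def Yv_def)
    have "real a - real b - 1 \<le> X" "X \<le> real a - real b + 1" using sq' by (auto simp: sq_char)
    then have "c * (real a - real b - 1) \<le> x" "x \<le> c * (real a - real b + 1)"
      using xX c by (auto simp: mult_le_cancel_left_pos)
    then have i1: "Inf U \<le> x" "x \<le> Sup U" using InfU[OF ab] SupU[OF ab] by auto
    have ab1: "1 \<le> a" "1 \<le> b" using DC_pos[OF Y] ab by auto
    have "\<bar>X\<bar> \<le> Yv" using sq_pos[OF sq' ab1] .
    then have i2: "\<bar>x\<bar> \<le> y" using xX c by (simp add: abs_mult)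
    have "Yv \<le> \<omega> X" using omega_ge_y[OF fin ab sq'] \<omega>_def by simp
    then have i3: "y \<le> g x" using xX c by (simp add: g_def)
    show "z \<in> gr g" using z i1 i2 i3 by (auto simp: grg)
  qed
  then show ?thesis by (simp add: g_def \<omega>_def)
qed



definition K1 :: "real \<Rightarrow> real \<Rightarrow> real" where "K1 c \<alpha> = (1 + \<alpha>) / (sqrt (1 + \<alpha>\<^sup>2) * c)"
definition K2 :: "real \<Rightarrow> real \<Rightarrow> real" where "K2 c \<alpha> = (\<alpha> - 1) / (sqrt (1 + \<alpha>\<^sup>2) * c)"
definition A1 :: "real \<Rightarrow> real \<times> real \<Rightarrow> real" where "A1 c p = (fst p + snd p) / c"
definition A2 :: "real \<Rightarrow> real \<times> real \<Rightarrow> real" where "A2 c p = (snd p - fst p) / c"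

definition Tl :: "real \<Rightarrow> real \<Rightarrow> real \<times> real \<Rightarrow> nat \<times> nat \<Rightarrow> real set" where
  "Tl c \<alpha> p q = {t. p + t *\<^sub>R v_dir \<alpha> \<in> sqc c q}"

lemma sqrt_pos: "0 < sqrt (1 + \<alpha>\<^sup>2)"
  by (simp add: add_pos_nonneg)

lemma line_mem:
  assumes c: "0 < c"
  shows "p + t *\<^sub>R v_dir \<alpha> \<in> sqc c (a,b) \<longleftrightarrow>
    2*real a - 2 \<le> A1 c p + t * K1 c \<alpha> \<and> A1 c p + t * K1 c \<alpha> \<le> 2*real a \<and>
    2*real b - 2 \<le> A2 c p + t * K2 c \<alpha> \<and> A2 c p + t * K2 c \<alpha> \<le> 2*real b"
proof -
  define s where "s = sqrt (1 + \<alpha>\<^sup>2)"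
  have s: "s \<noteq> 0" using sqrt_pos[of \<alpha>] unfolding s_def by linarith
  have vd: "v_dir \<alpha> = (1/s) *\<^sub>R (1, \<alpha>)" by (simp add: v_dir_def s_def)
  have k1: "K1 c \<alpha> = (1 + \<alpha>) / (s * c)" by (simp add: K1_def s_def)
  have k2: "K2 c \<alpha> = (\<alpha> - 1) / (s * c)" by (simp add: K2_def s_def)
  define z where "z = p + t *\<^sub>R v_dir \<alpha>"
  have e1: "fst z / c + snd z / c = A1 c p + t * K1 c \<alpha>"
    using c s unfolding z_def vd k1 A1_def by (simp add: field_simps)
  have e2: "snd z / c - fst z / c = A2 c p + t * K2 c \<alpha>"
    using c s unfolding z_def vd k2 A2_def by (simp add: field_simps)
  have "z \<in> sqc c (a,b) \<longleftrightarrow> (fst z / c, snd z / c) \<in> node_square (a,b)" by (simp add: sqc_def)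
  also have "\<dots> \<longleftrightarrow> 2*real a - 2 \<le> A1 c p + t * K1 c \<alpha> \<and> A1 c p + t * K1 c \<alpha> \<le> 2*real a \<and>
    2*real b - 2 \<le> A2 c p + t * K2 c \<alpha> \<and> A2 c p + t * K2 c \<alpha> \<le> 2*real b"
    unfolding sq_char e1 e2 ..
  finally show ?thesis by (simp add: z_def)
qed

lemma Tl_eq:
  assumes c: "0 < c"
  shows "Tl c \<alpha> p (a,b) = {t. 2*real a - 2 \<le> A1 c p + t * K1 c \<alpha> \<and> A1 c p + t * K1 c \<alpha> \<le> 2*real a \<and>
    2*real b - 2 \<le> A2 c p + t * K2 c \<alpha> \<and> A2 c p + t * K2 c \<alpha> \<le> 2*real b}"
  unfolding Tl_def using line_mem[OF c] by blast

lemma K1_pos: "0 < c \<Longrightarrow> -1 < \<alpha> \<Longrightarrow> 0 < K1 c \<alpha>"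
  unfolding K1_def using sqrt_pos[of \<alpha>] by (intro divide_pos_pos mult_pos_pos) auto

lemma K2_neg: "0 < c \<Longrightarrow> \<alpha> < 1 \<Longrightarrow> K2 c \<alpha> < 0"
  unfolding K2_def using sqrt_pos[of \<alpha>] by (intro divide_neg_pos mult_pos_pos) auto

lemma Tl_lmeasurable:
  assumes c: "0 < c" and al: "-1 < \<alpha>"
  shows "Tl c \<alpha> p q \<in> lmeasurable"
proof -
  obtain a b where q: "q = (a,b)" by (cases q)
  define k where "k = K1 c \<alpha>"
  have k: "0 < k" using K1_pos[OF c al] by (simp add: k_def)
  have cl: "closed (Tl c \<alpha> p q)"
    unfolding q Tl_eq[OF c]
    by (intro closed_Collect_conj closed_Collect_le continuous_intros)
  have "Tl c \<alpha> p q \<subseteq> {(2*real a - 2 - A1 c p)/k .. (2*real a - A1 c p)/k}"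
  proof
    fix t assume "t \<in> Tl c \<alpha> p q"
    then have "2*real a - 2 - A1 c p \<le> t * k" "t * k \<le> 2*real a - A1 c p"
      unfolding q Tl_eq[OF c] k_def by auto
    then show "t \<in> {(2*real a - 2 - A1 c p)/k .. (2*real a - A1 c p)/k}"
      using k by (simp add: pos_divide_le_eq pos_le_divide_eq)
  qed
  then have "bounded (Tl c \<alpha> p q)" by (rule bounded_subset[OF bounded_closed_interval])
  then show ?thesis using cl by (intro lmeasurable_compact) (simp add: compact_eq_bounded_closed)
qed

lemma interval_nat_inter:
  assumes "(a::nat) \<noteq> a'" "2*real a - 2 \<le> s" "s \<le> 2*real a" "2*real a' - 2 \<le> s" "s \<le> 2*real a'"
  shows "s = 2 * real (min a a')"
proof (cases "a < a'")
  case True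
  then have "real a + 1 \<le> real a'" by linarith
  then show ?thesis using assms True by simp
next
  case False
  then have "real a' + 1 \<le> real a" using assms(1) by linarith
  then show ?thesis using assms False by simp
qed

lemma Tl_inter:
  assumes c: "0 < c" and al: "-1 < \<alpha>" "\<alpha> < 1" and ne: "q \<noteq> q'"
  shows "negligible (Tl c \<alpha> p q \<inter> Tl c \<alpha> p q')"
proof -
  obtain a b where q: "q = (a,b)" by (cases q)
  obtain a' b' where q': "q' = (a',b')" by (cases q')
  have k1: "K1 c \<alpha> \<noteq> 0" using K1_pos[OF c al(1)] by simp
  have k2: "K2 c \<alpha> \<noteq> 0" using K2_neg[OF c al(2)] by simp
  have uniq: "t1 = t2" if t1: "t1 \<in> Tl c \<alpha> p q \<inter> Tl c \<alpha> p q'" and t2: "t2 \<in> Tl c \<alpha> p q \<inter> Tl c \<alpha> p q'" for t1 t2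
  proof (cases "a = a'")
    case False
    have "A1 c p + t1 * K1 c \<alpha> = 2 * real (min a a')"
      using t1 interval_nat_inter[OF False] unfolding q q' Tl_eq[OF c] by auto
    moreover have "A1 c p + t2 * K1 c \<alpha> = 2 * real (min a a')"
      using t2 interval_nat_inter[OF False] unfolding q q' Tl_eq[OF c] by auto
    ultimately have "t1 * K1 c \<alpha> = t2 * K1 c \<alpha>" by linarith
    then show ?thesis using k1 by simp
  next
    case True
    then have bb: "b \<noteq> b'" using ne q q' by auto
    have "A2 c p + t1 * K2 c \<alpha> = 2 * real (min b b')"
      using t1 interval_nat_inter[OF bb] unfolding q q' Tl_eq[OF c] by auto
    moreover have "A2 c p + t2 * K2 c \<alpha> = 2 * real (min b b')"
      using t2 interval_nat_inter[OF bb] unfolding q q' Tl_eq[OF c] by auto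
    ultimately have "t1 * K2 c \<alpha> = t2 * K2 c \<alpha>" by linarith
    then show ?thesis using k2 by simp
  qed
  have "finite (Tl c \<alpha> p q \<inter> Tl c \<alpha> p q')"
  proof (cases "Tl c \<alpha> p q \<inter> Tl c \<alpha> p q' = {}")
    case False
    then obtain t0 where t0: "t0 \<in> Tl c \<alpha> p q \<inter> Tl c \<alpha> p q'" by blast
    then have "Tl c \<alpha> p q \<inter> Tl c \<alpha> p q' \<subseteq> {t0}" using uniq by blast
    then show ?thesis using finite_subset by blast
  qed simp
  then show ?thesis by (rule negligible_finite)
qed

lemma div_div_cancel: "(w::real) \<noteq> 0 \<Longrightarrow> (x / w) / (y / w) = x / y"
  by (cases "y = 0") (auto simp: field_simps)

lemma Tl_shift:
  assumes c: "0 < c" and al: "-1 < \<alpha>"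
    and rel: "(real a' - real a) * (\<alpha> - 1) = (real b' - real b) * (1 + \<alpha>)"
  shows "Tl c \<alpha> p (a',b') = (+) ((2*real a' - 2*real a) / K1 c \<alpha>) ` Tl c \<alpha> p (a,b)"
proof -
  define \<sigma> where "\<sigma> = (2*real a' - 2*real a) / K1 c \<alpha>"
  have k1: "K1 c \<alpha> \<noteq> 0" using K1_pos[OF c al] by simp
  define s where "s = sqrt (1 + \<alpha>\<^sup>2)"
  have s: "s \<noteq> 0" using sqrt_pos[of \<alpha>] unfolding s_def by linarith
  have kk1: "K1 c \<alpha> = (1 + \<alpha>) / (s * c)" by (simp add: K1_def s_def)
  have kk2: "K2 c \<alpha> = (\<alpha> - 1) / (s * c)" by (simp add: K2_def s_def)
  have h1: "\<sigma> * K1 c \<alpha> = 2*real a' - 2*real a" using k1 by (simp add: \<sigma>_def)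
  have h2: "\<sigma> * K2 c \<alpha> = 2*real b' - 2*real b"
  proof -
    have "\<sigma> * K2 c \<alpha> = (2*real a' - 2*real a) * (\<alpha> - 1) / (1 + \<alpha>)"
    proof -
      have al1: "1 + \<alpha> \<noteq> 0" using al by linarith
      have sc: "s * c \<noteq> 0" using s c by simp
      have "K1 c \<alpha> \<noteq> 0" using k1 .
      have q: "K2 c \<alpha> / K1 c \<alpha> = (\<alpha> - 1) / (1 + \<alpha>)"
        unfolding kk1 kk2 using sc by (rule div_div_cancel)
      have "\<sigma> * K2 c \<alpha> = (2*real a' - 2*real a) * (K2 c \<alpha> / K1 c \<alpha>)"
        by (simp add: \<sigma>_def)
      then show ?thesis unfolding q by simp
    qed
    also have "\<dots> = 2*real b' - 2*real b" using rel al by (simp add: field_simps)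
    finally show ?thesis .
  qed
  have mem: "t \<in> Tl c \<alpha> p (a',b') \<longleftrightarrow> t - \<sigma> \<in> Tl c \<alpha> p (a,b)" for t
  proof -
    have e1: "A1 c p + (t - \<sigma>) * K1 c \<alpha> = A1 c p + t * K1 c \<alpha> - (2*real a' - 2*real a)"
      using h1 by (simp add: algebra_simps)
    have e2: "A2 c p + (t - \<sigma>) * K2 c \<alpha> = A2 c p + t * K2 c \<alpha> - (2*real b' - 2*real b)"
      using h2 by (simp add: algebra_simps)
    show ?thesis unfolding Tl_eq[OF c] mem_Collect_eq e1 e2 by linarith
  qed
  have "Tl c \<alpha> p (a',b') = {t. t - \<sigma> \<in> Tl c \<alpha> p (a,b)}" using mem by blast
  also have "\<dots> = (+) \<sigma> ` Tl c \<alpha> p (a,b)"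
  proof (intro set_eqI iffI)
    fix t assume "t \<in> {t. t - \<sigma> \<in> Tl c \<alpha> p (a,b)}"
    then show "t \<in> (+) \<sigma> ` Tl c \<alpha> p (a,b)" by (intro image_eqI[of _ _ "t - \<sigma>"]) auto
  qed auto
  finally show ?thesis by (simp add: \<sigma>_def)
qed

lemma Sh_cong:
  assumes "\<And>p. K1' \<inter> {p + t *\<^sub>R v_dir \<alpha> | t. True} = {} \<longleftrightarrow> K2' \<inter> {p + t *\<^sub>R v_dir \<alpha> | t. True} = {}"
    and "\<And>p. measure lebesgue {t. p + t *\<^sub>R v_dir \<alpha> \<in> K1'} = measure lebesgue {t. p + t *\<^sub>R v_dir \<alpha> \<in> K2'}"
  shows "Sh \<alpha> K1' = Sh \<alpha> K2'"
  unfolding Sh_def using assms by simp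

lemma line_empty: "K \<inter> {p + t *\<^sub>R v | t. True} = {} \<longleftrightarrow> {t. p + t *\<^sub>R v \<in> K} = {}"
  by blast

lemma Tl_Union: "{t. p + t *\<^sub>R v_dir \<alpha> \<in> (\<Union>q\<in>Y. sqc c q)} = (\<Union>q\<in>Y. Tl c \<alpha> p q)"
  by (auto simp: Tl_def)

lemma ladder_rel:
  assumes e: "e \<ge> 2" and ab: "1 \<le> b" "1 \<le> b'" and lad: "ladder e (a,b) = ladder e (a',b')"
  shows "(real a' - real a) * ((1 - 2 / real e) - 1) = (real b' - real b) * (1 + (1 - 2 / real e))"
proof -
  have "real a + (real e - 1) * (real b - 1) = real a' + (real e - 1) * (real b' - 1)"
  proof -
    have "real (a + (e-1)*(b-1)) = real (a' + (e-1)*(b'-1))" using lad by (simp add: ladder_eq)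
    then show ?thesis using e ab by (simp add: of_nat_diff)
  qed
  then have h: "real a' - real a = (real e - 1) * (real b - real b')" by (simp add: algebra_simps)
  have e0: "real e \<noteq> 0" using e by simp
  show ?thesis unfolding h using e0 by (simp add: field_simps)
qed

lemma alpha_bounds: "e \<ge> 2 \<Longrightarrow> -1 < 1 - 2 / real e \<and> 1 - 2 / real e < 1"
proof -
  assume e: "e \<ge> 2"
  then have "0 < 2 / real e" "2 / real e \<le> 1" by auto
  then show ?thesis by linarith
qed

lemma shift_rep:
  assumes e: "e \<ge> 2" and c: "0 < c" and ab: "1 \<le> a" "1 \<le> b"
  defines "\<alpha> \<equiv> 1 - 2 / real e"
  shows "measure lebesgue (Tl c \<alpha> p (a,b)) = measure lebesgue (Tl c \<alpha> p (ladder e (a,b), 1))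
     \<and> (Tl c \<alpha> p (a,b) = {} \<longleftrightarrow> Tl c \<alpha> p (ladder e (a,b), 1) = {})"
proof -
  have al: "-1 < \<alpha>" using alpha_bounds[OF e] by (simp add: \<alpha>_def)
  have lad: "ladder e (a,b) = ladder e (ladder e (a,b), 1)" by (simp add: ladder_eq)
  have rel: "(real (ladder e (a,b)) - real a) * (\<alpha> - 1) = (real 1 - real b) * (1 + \<alpha>)"
    using ladder_rel[OF e ab(2) _ lad] by (simp add: \<alpha>_def)
  note sh = Tl_shift[OF c al rel]
  show ?thesis unfolding sh measure_translation by simp
qed

lemma meas_formula:
  assumes e: "e \<ge> 2" and c: "0 < c" and fin: "finite Y" and pos: "\<forall>(a,b)\<in>Y. 1 \<le> a \<and> 1 \<le> b"
    and S: "finite S" "ladder e ` Y \<subseteq> S"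
  defines "\<alpha> \<equiv> 1 - 2 / real e"
  shows "measure lebesgue {t. p + t *\<^sub>R v_dir \<alpha> \<in> (\<Union>q\<in>Y. sqc c q)}
       = (\<Sum>L\<in>S. real (cnt e Y L) * measure lebesgue (Tl c \<alpha> p (L, 1)))"
proof -
  have al: "-1 < \<alpha>" "\<alpha> < 1" using alpha_bounds[OF e] by (simp_all add: \<alpha>_def)
  define G where "G L = measure lebesgue (Tl c \<alpha> p (L, 1))" for L
  have "measure lebesgue {t. p + t *\<^sub>R v_dir \<alpha> \<in> (\<Union>q\<in>Y. sqc c q)}
      = measure lebesgue (\<Union>q\<in>Y. Tl c \<alpha> p q)" by (simp only: Tl_Union)
  also have "\<dots> = (\<Sum>q\<in>Y. measure lebesgue (Tl c \<alpha> p q))"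
    using fin Tl_lmeasurable[OF c al(1)] Tl_inter[OF c al]
    by (intro measure_negligible_finite_Union_image) (auto simp: pairwise_def)
  also have "\<dots> = (\<Sum>q\<in>Y. G (ladder e q))"
  proof (rule sum.cong)
    fix q assume "q \<in> Y"
    then obtain a b where q: "q = (a,b)" "1 \<le> a" "1 \<le> b" using pos by (cases q) auto
    show "measure lebesgue (Tl c \<alpha> p q) = G (ladder e q)"
      using shift_rep[OF e c q(2,3), of p] unfolding G_def q(1) \<alpha>_def by simp
  qed simp
  also have "\<dots> = (\<Sum>L\<in>S. \<Sum>q\<in>{q\<in>Y. ladder e q = L}. G (ladder e q))"
    using sum.group[OF fin S(1) S(2), of "\<lambda>q. G (ladder e q)"] by simp
  also have "\<dots> = (\<Sum>L\<in>S. real (cnt e Y L) * G L)"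
  proof (rule sum.cong)
    fix L assume "L \<in> S"
    have "(\<Sum>q\<in>{q\<in>Y. ladder e q = L}. G (ladder e q)) = (\<Sum>q\<in>{q\<in>Y. ladder e q = L}. G L)"
      by (rule sum.cong) auto
    then show "(\<Sum>q\<in>{q\<in>Y. ladder e q = L}. G (ladder e q)) = real (cnt e Y L) * G L"
      by (simp add: cnt_def)
  qed simp
  finally show ?thesis by (simp add: G_def)
qed

lemma empty_formula:
  assumes e: "e \<ge> 2" and c: "0 < c" and fin: "finite Y" and pos: "\<forall>(a,b)\<in>Y. 1 \<le> a \<and> 1 \<le> b"
  defines "\<alpha> \<equiv> 1 - 2 / real e"
  shows "{t. p + t *\<^sub>R v_dir \<alpha> \<in> (\<Union>q\<in>Y. sqc c q)} = {}
       \<longleftrightarrow> (\<forall>L. cnt e Y L \<noteq> 0 \<longrightarrow> Tl c \<alpha> p (L, 1) = {})"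
proof -
  have "{t. p + t *\<^sub>R v_dir \<alpha> \<in> (\<Union>q\<in>Y. sqc c q)} = {} \<longleftrightarrow> (\<forall>q\<in>Y. Tl c \<alpha> p q = {})"
    unfolding Tl_Union by blast
  also have "\<dots> \<longleftrightarrow> (\<forall>q\<in>Y. Tl c \<alpha> p (ladder e q, 1) = {})"
  proof -
    have "Tl c \<alpha> p q = {} \<longleftrightarrow> Tl c \<alpha> p (ladder e q, 1) = {}" if qY: "q \<in> Y" for q
    proof -
      obtain a b where q: "q = (a,b)" "1 \<le> a" "1 \<le> b" using pos qY by (cases q) auto
      show ?thesis using shift_rep[OF e c q(2,3), of p] unfolding q(1) \<alpha>_def by simp
    qed
    then show ?thesis by blast
  qed
  also have "\<dots> \<longleftrightarrow> (\<forall>L. cnt e Y L \<noteq> 0 \<longrightarrow> Tl c \<alpha> p (L, 1) = {})"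
  proof -
    have "cnt e Y L \<noteq> 0 \<longleftrightarrow> (\<exists>q\<in>Y. ladder e q = L)" for L
    proof -
      have "finite {q\<in>Y. ladder e q = L}" using fin by simp
      then show ?thesis unfolding cnt_def by (auto simp: card_eq_0_iff)
    qed
    then show ?thesis by auto
  qed
  finally show ?thesis .
qed

lemma sh_union_eq:
  assumes e: "e \<ge> 2" and c: "0 < c" and f1: "finite Y1" and f2: "finite Y2"
    and p1: "\<forall>(a,b)\<in>Y1. 1 \<le> a \<and> 1 \<le> b" and p2: "\<forall>(a,b)\<in>Y2. 1 \<le> a \<and> 1 \<le> b"
    and cn: "\<And>L. cnt e Y1 L = cnt e Y2 L"
  shows "sh e (\<Union>q\<in>Y1. sqc c q) = sh e (\<Union>q\<in>Y2. sqc c q)"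
proof -
  define S where "S = ladder e ` Y1 \<union> ladder e ` Y2"
  have S: "finite S" "ladder e ` Y1 \<subseteq> S" "ladder e ` Y2 \<subseteq> S" using f1 f2 by (auto simp: S_def)
  show ?thesis unfolding sh_def
  proof (rule Sh_cong)
    fix p
    show "measure lebesgue {t. p + t *\<^sub>R v_dir (1 - 2 / real e) \<in> (\<Union>q\<in>Y1. sqc c q)} =
          measure lebesgue {t. p + t *\<^sub>R v_dir (1 - 2 / real e) \<in> (\<Union>q\<in>Y2. sqc c q)}"
      unfolding meas_formula[OF e c f1 p1 S(1,2)] meas_formula[OF e c f2 p2 S(1,3)] cn ..
    show "(\<Union>q\<in>Y1. sqc c q) \<inter> {p + t *\<^sub>R v_dir (1 - 2 / real e) |t. True} = {} \<longleftrightarrow>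
          (\<Union>q\<in>Y2. sqc c q) \<inter> {p + t *\<^sub>R v_dir (1 - 2 / real e) |t. True} = {}"
      unfolding line_empty empty_formula[OF e c f1 p1] empty_formula[OF e c f2 p2] cn ..
  qed
qed



theorem lemma5p1:
  fixes e n :: nat and lam :: "nat list"
  assumes "e \<ge> 2" and "is_partition lam n" and "lam \<noteq> []"
  shows "sh e (gr (omega lam)) = sh e (gr (omega_nodes (reg_nodes e (young lam))))
    \<and> sh e (gr (omega_tilde n lam)) = sh e (gr (omega_tilde_nodes n (reg_nodes e (young lam))))"
proof -
  note e = assms(1) and ip = assms(2) and ne = assms(3)
  define Y where "Y = young lam"
  define R where "R = reg_nodes e Y"
  have DY: "DC Y" and fY: "finite Y" and nY: "Y \<noteq> {}"
    using young_DC[OF ip] young_finite[OF ip] young_nonempty[OF ip ne] by (simp_all add: Y_def)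
  have DR: "DC R" and fR: "finite R" and nR: "R \<noteq> {}"
    using reg_DC[OF e DY] reg_finite[OF e DY fY] reg_nonempty[OF e DY fY nY] by (simp_all add: R_def)
  have cn: "cnt e Y L = cnt e R L" for L using cnt_reg[OF e DC_pos[OF DY]] by (simp add: R_def)
  have shq: "sh e (\<Union>q\<in>Y. sqc c q) = sh e (\<Union>q\<in>R. sqc c q)" if c: "0 < c" for c
    using sh_union_eq[OF e c fY fR DC_pos[OF DY] DC_pos[OF DR] cn] .
  have gY: "gr (omega_nodes Y) = (\<Union>q\<in>Y. sqc 1 q)" using gr_omega[OF DY fY nY, of 1] by simp
  have gR: "gr (omega_nodes R) = (\<Union>q\<in>R. sqc 1 q)" using gr_omega[OF DR fR nR, of 1] by simp
  have part1: "sh e (gr (omega lam)) = sh e (gr (omega_nodes R))"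
    unfolding omega_def Y_def[symmetric] gY gR using shq[of 1] by simp
  have "lam ! 0 \<in> set lam" using ne by simp
  then have "0 < lam ! 0" "lam ! 0 \<le> sum_list lam"
    using ip member_le_sum_list[of "lam ! 0" lam] by (auto simp: is_partition_def)
  then have npos: "0 < n" using ip by (simp add: is_partition_def)
  define c where "c = 1 / sqrt (real n)"
  have c: "0 < c" using npos by (simp add: c_def)
  have sn: "sqrt (real n) \<noteq> 0" using npos by simp
  have t1: "omega_tilde n lam = (\<lambda>x. c * omega_nodes Y (x / c))"
    using sn by (simp add: omega_tilde_def omega_tilde_nodes_def Y_def c_def fun_eq_iff)
  have t2: "omega_tilde_nodes n R = (\<lambda>x. c * omega_nodes R (x / c))"
    using sn by (simp add: omega_tilde_nodes_def c_def fun_eq_iff)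
  have part2: "sh e (gr (omega_tilde n lam)) = sh e (gr (omega_tilde_nodes n R))"
    unfolding t1 t2 gr_omega[OF DY fY nY c] gr_omega[OF DR fR nR c] using shq[OF c] .
  show ?thesis using part1 part2 by (simp add: R_def Y_def)
qed

end
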